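(* Fix $\alpha\in(1/2,1)$. Then for every $n\ge 0$ and every rooted tree $T$ on $n$ nodes, the tree $U_n$ defined below contains a subgraph isomorphic to a subdivision of $T$. Equivalently, there is an injective map $f$ from the nodes of $T$ to the nodes of $U_n$ with $f(\mathsf{NCA}(u,v))=\mathsf{NCA}(f(u),f(v))$ for all $u,v$. Definition of $a_N$: for integers $N\ge0$, $a_0$ is the empty sequence, $a_1=(1)$, and for $N\ge 2$, $a_N=a_{\lfloor N/2\rfloor}\oplus(N)\oplus a_{\lfloor N/2\rfloor}$, where $\oplus$ denotes concatenation. Definition of $U_n$: $U_0$ is the empty tree and $U_1$ is a single node. For $n\ge2$, let $N=\lfloor(1-\alpha)n\rfloor$ and $a_N=(a(1),\dots,a(k))$. Then $U_n$ consists of a path $u_1-\dots-u_{k+1}$ rooted at $u_1$, with the following subtrees attached: - for each $i=1,\dots,k$, a copy of $U_{a(i)-1}$ and, for every integer $j\ge 2$, a copy of $U_{\lfloor a(i)/j\rfloor}$, all attached to $u_i$; - a copy of $U_{\lfloor\alpha n\rfloor}$ and, for every integer $j\ge2$, a copy of $U_{\lfloor (n-1)/j\rfloor}$, all attached to $u_{k+1}$. Attaching a copy of a tree to a node means making its root a child of that node; copies of the empty tree add nothing.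
   Context: Trees are rooted and unordered, with edges directed from parent to child. The degree of a node is its number of children. $\mathsf{NCA}$ denotes the nearest common ancestor. *)

theory Defs
  imports Complex_Main "HOL-Library.Sublist"
begin

text \<open>Rooted trees; the children list order is irrelevant for the notions used below
(node sets addressed by child-index paths, NCA = longest common prefix of paths).\<close>
datatype tree = Node "tree list"

inductive is_node :: "tree \<Rightarrow> nat list \<Rightarrow> bool" where
  root: "is_node t []"
| child: "i < length ts \<Longrightarrow> is_node (ts ! i) p \<Longrightarrow> is_node (Node ts) (i # p)"

definition tree_nodes :: "tree \<Rightarrow> nat list set" where
  "tree_nodes t = {p. is_node t p}"

definition NCA :: "nat list \<Rightarrow> nat list \<Rightarrow> nat list" where
  "NCA u v = longest_common_prefix u v"

fun aseq :: "nat \<Rightarrow> nat list" where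
  "aseq N = (if N = 0 then [] else if N = 1 then [1]
             else aseq (N div 2) @ [N] @ aseq (N div 2))"

text \<open>Path u_1 - ... - u_(k+1): first argument lists the extra children of u_1..u_k,
  second argument the children of u_(k+1).\<close>
fun pathtree :: "tree list list \<Rightarrow> tree list \<Rightarrow> tree" where
  "pathtree [] b = Node b"
| "pathtree (c # cs) b = Node (pathtree cs b # c)"

text \<open>Uf alpha n is the forest of copies contributed by U_n: [] for the empty tree U_0,
  [U_n] otherwise. Recursive calls are guarded by m < n, which always holds for
  alpha in (1/2,1) (all recursive sizes are < n); the guard only ensures termination.
  Copies U_(floor(a/j)) for j > a and U_(floor((n-1)/j)) for j > n are empty and omitted.\<close>
function Uf :: "real \<Rightarrow> nat \<Rightarrow> tree list" where
  "Uf alpha n =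
    (if n = 0 then [] else if n = 1 then [Node []] else
     (let N = nat \<lfloor>(1 - alpha) * real n\<rfloor>;
          a = aseq N;
          rec = (\<lambda>m. if m < n then Uf alpha m else []);
          side = (\<lambda>x. rec (x - 1) @ concat (map (\<lambda>j. rec (x div j)) [2..<x+1]));
          bottom = rec (nat \<lfloor>alpha * real n\<rfloor>) @ concat (map (\<lambda>j. rec ((n - 1) div j)) [2..<n+1])
      in [pathtree (map side a) bottom]))"
  by pat_completeness auto
termination
  by (relation "measure (\<lambda>(alpha, n). n)") auto

definition Utree :: "real \<Rightarrow> nat \<Rightarrow> tree" where
  "Utree alpha n = hd (Uf alpha n)"

end

theory Submission
  imports Defs
begin

declare Uf.simps [simp del] aseq.simps [simp del]

lemma Uf_single: "m \<noteq> 0 \<Longrightarrow> \<exists>t. Uf alpha m = [t]"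
  by (subst Uf.simps) (simp add: Let_def)

lemma Uf0: "Uf alpha 0 = []"
  by (subst Uf.simps) simp

lemma Uf_eq: "Uf alpha m = (if m = 0 then [] else [Utree alpha m])"
  using Uf_single[of m alpha] Uf0 unfolding Utree_def by auto

lemma aseq_le: "x \<in> set (aseq N) \<Longrightarrow> 1 \<le> x \<and> x \<le> N"
proof (induction N rule: less_induct)
  case (less N)
  show ?case
  proof (cases "N \<le> 1")
    case True then show ?thesis using less.prems by (subst (asm) aseq.simps) (auto split: if_splits)
  next
    case False
    then have "aseq N = aseq (N div 2) @ [N] @ aseq (N div 2)" by (subst aseq.simps) auto
    with less.prems have "x = N \<or> x \<in> set (aseq (N div 2))" by auto
    then show ?thesis using less.IH[of "N div 2"] False by auto
  qed
qed

definition sidel :: "nat \<Rightarrow> nat list" where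
  "sidel x = filter (\<lambda>m. 0 < m) ((x - 1) # map (\<lambda>j. x div j) [2..<x+1])"
definition botl :: "real \<Rightarrow> nat \<Rightarrow> nat list" where
  "botl alpha n = filter (\<lambda>m. 0 < m) (nat \<lfloor>alpha * real n\<rfloor> # map (\<lambda>j. (n - 1) div j) [2..<n+1])"

lemma concat_Uf: "(\<forall>j\<in>set js. j < n) \<Longrightarrow>
  concat (map (\<lambda>j. if j < n then Uf alpha j else []) js) = map (Utree alpha) (filter (\<lambda>m. 0<m) js)"
  by (induction js) (auto simp: Uf_eq)

lemma Utree_unfold:
  assumes "1/2 < alpha" "alpha < 1" "2 \<le> n"
  shows "Utree alpha n = pathtree (map (\<lambda>x. map (Utree alpha) (sidel x)) (aseq (nat \<lfloor>(1-alpha)*real n\<rfloor>)))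
     (map (Utree alpha) (botl alpha n))"
proof -
  have N: "nat \<lfloor>(1-alpha)*real n\<rfloor> < n"
  proof -
    have "(1-alpha)*real n < real n" using assms by auto
    then show ?thesis using assms by linarith
  qed
  have A: "nat \<lfloor>alpha*real n\<rfloor> < n"
  proof -
    have "alpha*real n < real n" using assms by auto
    then show ?thesis using assms by linarith
  qed
  let ?rec = "\<lambda>m. if m < n then Uf alpha m else []"
  have side: "?rec (x - 1) @ concat (map (\<lambda>j. ?rec (x div j)) [2..<x+1]) = map (Utree alpha) (sidel x)"
    if "x \<in> set (aseq (nat \<lfloor>(1-alpha)*real n\<rfloor>))" for x
  proof -
    have "x < n" using aseq_le[OF that] N by auto
    then have "?rec (x - 1) @ concat (map (\<lambda>j. ?rec (x div j)) [2..<x+1])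
       = concat (map (\<lambda>j. ?rec (j)) ((x - 1) # map (\<lambda>j. x div j) [2..<x+1]))"
      by (simp add: comp_def cong: if_cong)
    also have "\<dots> = map (Utree alpha) (sidel x)"
      unfolding sidel_def using \<open>x < n\<close>
      by (subst concat_Uf[where n = n]) (auto intro: le_less_trans[OF div_le_dividend])
    finally show ?thesis .
  qed
  have bot: "?rec (nat \<lfloor>alpha * real n\<rfloor>) @ concat (map (\<lambda>j. ?rec ((n - 1) div j)) [2..<n+1]) = map (Utree alpha) (botl alpha n)"
  proof -
    have "?rec (nat \<lfloor>alpha * real n\<rfloor>) @ concat (map (\<lambda>j. ?rec ((n - 1) div j)) [2..<n+1])
       = concat (map (\<lambda>j. ?rec (j)) (nat \<lfloor>alpha * real n\<rfloor> # map (\<lambda>j. (n - 1) div j) [2..<n+1]))"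
      by (simp add: comp_def cong: if_cong)
    also have "\<dots> = map (Utree alpha) (botl alpha n)"
      unfolding botl_def using A assms
      by (subst concat_Uf[where n = n]) (auto intro: le_less_trans[OF div_le_dividend])
    finally show ?thesis .
  qed
  show ?thesis
  proof -
    have "Uf alpha n = [pathtree (map (\<lambda>x. ?rec (x - 1) @ concat (map (\<lambda>j. ?rec (x div j)) [2..<x+1]))
       (aseq (nat \<lfloor>(1-alpha)*real n\<rfloor>)))
      (?rec (nat \<lfloor>alpha * real n\<rfloor>) @ concat (map (\<lambda>j. ?rec ((n - 1) div j)) [2..<n+1]))]"
      using assms by (subst Uf.simps) (simp add: Let_def cong: if_cong)
    then show ?thesis using side bot unfolding Utree_def[of alpha n] by (simp cong: map_cong)
  qed
qed

lemma is_node_Node: "is_node (Node ts) p \<longleftrightarrow> p = [] \<or> (\<exists>i q. p = i # q \<and> i < length ts \<and> is_node (ts!i) q)"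
  by (auto intro: is_node.intros elim: is_node.cases)

lemma tree_nodes_Node: "tree_nodes (Node ts) = insert [] (\<Union>i<length ts. Cons i ` tree_nodes (ts!i))"
  unfolding tree_nodes_def by (rule set_eqI) (simp add: is_node_Node, blast)

lemma finite_nodes: "finite (tree_nodes t)"
  by (induction t) (auto simp: tree_nodes_Node)

definition sz :: "tree \<Rightarrow> nat" where "sz t = card (tree_nodes t)"

lemma sz_Node: "sz (Node ts) = 1 + (\<Sum>i<length ts. sz (ts!i))"
proof -
  have "card (\<Union>i<length ts. Cons i ` tree_nodes (ts!i)) = (\<Sum>i<length ts. card (Cons i ` tree_nodes (ts!i)))"
    by (rule card_UN_disjoint) (auto simp: finite_nodes)
  also have "\<dots> = (\<Sum>i<length ts. sz (ts!i))"
    by (simp add: card_image sz_def)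
  finally show ?thesis unfolding sz_def tree_nodes_Node
    by (subst card_insert_disjoint) (auto simp: finite_nodes)
qed

lemma sz_pos: "1 \<le> sz t"
  unfolding sz_def using finite_nodes[of t]
  by (metis One_nat_def Suc_leI card_gt_0_iff empty_iff is_node.root mem_Collect_eq tree_nodes_def)

lemma NCA_simps[simp]: "NCA (i#p) (i#q) = i # NCA p q" "i \<noteq> j \<Longrightarrow> NCA (i#p) (j#q) = []"
  "NCA [] q = []" "NCA p [] = []"
  unfolding NCA_def
  apply simp
  apply simp
  apply simp
  apply (cases p; simp)
  done

definition emb :: "tree \<Rightarrow> tree \<Rightarrow> (nat list \<Rightarrow> nat list) \<Rightarrow> bool" where
  "emb T S f \<longleftrightarrow> inj_on f (tree_nodes T) \<and> f ` tree_nodes T \<subseteq> tree_nodes S \<and>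
     (\<forall>u\<in>tree_nodes T. \<forall>v\<in>tree_nodes T. f (NCA u v) = NCA (f u) (f v))"

lemma emb_step:
  assumes "i < length cs" "emb T (cs!i) g"
  shows "emb T (Node cs) (\<lambda>p. i # g p)"
  using assms unfolding emb_def tree_nodes_def inj_on_def
  by (auto simp: is_node_Node)

lemma emb_pathtree:
  "emb T (pathtree cs b) g \<Longrightarrow> emb T (pathtree (pre @ cs) b) (\<lambda>p. replicate (length pre) 0 @ g p)"
proof (induction pre)
  case Nil then show ?case by simp
next
  case (Cons c pre)
  have "emb T (pathtree ((c # pre) @ cs) b) (\<lambda>p. 0 # (replicate (length pre) 0 @ g p))"
    using emb_step[of 0 "pathtree (pre @ cs) b # c" T "\<lambda>p. replicate (length pre) 0 @ g p"] Cons.IH[OF Cons.prems] by simp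
  then show ?case by simp
qed

lemma emb_node:
  assumes inj: "inj_on pos {..<length ts}"
    and ch: "\<forall>i<length ts. pos i < length cs \<and> emb (ts!i) (cs!pos i) (g i)"
  shows "emb (Node ts) (Node cs) (\<lambda>p. case p of [] \<Rightarrow> [] | i#q \<Rightarrow> pos i # g i q)"
  unfolding emb_def
proof (intro conjI ballI)
  let ?f = "\<lambda>p. case p of [] \<Rightarrow> [] | i#q \<Rightarrow> pos i # g i q"
  show "inj_on ?f (tree_nodes (Node ts))"
  proof (rule inj_onI)
    fix u v assume u: "u \<in> tree_nodes (Node ts)" and v: "v \<in> tree_nodes (Node ts)" and e: "?f u = ?f v"
    show "u = v"
    proof (cases u)
      case Nil then show ?thesis using e by (cases v) auto
    next
      case (Cons i p)
      then obtain j q where vq: "v = j # q" using e by (cases v) auto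
      have i: "i < length ts" "is_node (ts!i) p" using u Cons by (auto simp: tree_nodes_def is_node_Node)
      have j: "j < length ts" "is_node (ts!j) q" using v vq by (auto simp: tree_nodes_def is_node_Node)
      have "pos i = pos j" using e Cons vq by simp
      then have "i = j" using inj i j by (auto dest: inj_onD)
      then have "g i p = g i q" using e Cons vq by simp
      then have "p = q" using ch i j \<open>i = j\<close> unfolding emb_def tree_nodes_def by (auto dest: inj_onD)
      then show ?thesis using Cons vq \<open>i = j\<close> by simp
    qed
  qed
  show "?f ` tree_nodes (Node ts) \<subseteq> tree_nodes (Node cs)"
  proof
    fix x assume "x \<in> ?f ` tree_nodes (Node ts)"
    then obtain u where u: "u \<in> tree_nodes (Node ts)" and x: "x = ?f u" by auto
    show "x \<in> tree_nodes (Node cs)"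
    proof (cases u)
      case Nil then show ?thesis using x by (simp add: tree_nodes_def is_node.root)
    next
      case (Cons i p)
      have i: "i < length ts" "is_node (ts!i) p" using u Cons by (auto simp: tree_nodes_def is_node_Node)
      then have "is_node (cs ! pos i) (g i p)" using ch unfolding emb_def tree_nodes_def by auto
      then show ?thesis using x Cons ch i by (auto simp: tree_nodes_def is_node_Node)
    qed
  qed
  fix u v assume u: "u \<in> tree_nodes (Node ts)" and v: "v \<in> tree_nodes (Node ts)"
  show "?f (NCA u v) = NCA (?f u) (?f v)"
  proof (cases u)
    case Nil then show ?thesis by simp
  next
    case (Cons i p)
    show ?thesis
    proof (cases "v = []")
      case True then show ?thesis by (cases "?f u") auto
    next
      case False
      then obtain j q where Cons2: "v = j # q" by (cases v) auto
      have i: "i < length ts" "is_node (ts!i) p" using u Cons by (auto simp: tree_nodes_def is_node_Node)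
      have j: "j < length ts" "is_node (ts!j) q" using v Cons2 by (auto simp: tree_nodes_def is_node_Node)
      show ?thesis
      proof (cases "i = j")
        case True
        then show ?thesis using Cons Cons2 ch i j unfolding emb_def tree_nodes_def by auto
      next
        case False
        then have "pos i \<noteq> pos j" using inj i j by (auto dest: inj_onD)
        then show ?thesis using Cons Cons2 False by simp
      qed
    qed
  qed
qed

lemma emb_leaf: "emb (Node []) S (\<lambda>p. [])"
  unfolding emb_def by (auto simp: tree_nodes_def is_node.root inj_on_def is_node_Node)

inductive dseq :: "nat list \<Rightarrow> nat list \<Rightarrow> bool" where
  dnil: "dseq [] xs"
| skip: "dseq bs xs \<Longrightarrow> dseq bs (x # xs)"
| match: "b \<le> x \<Longrightarrow> dseq bs xs \<Longrightarrow> dseq (b # bs) (x # xs)"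

lemma dom_prepend: "dseq bs ys \<Longrightarrow> dseq bs (xs @ ys)"
  by (induction xs) (auto intro: dseq.intros)

lemma dom_append: "dseq bs xs \<Longrightarrow> dseq cs ys \<Longrightarrow> dseq (bs @ cs) (xs @ ys)"
  by (induction rule: dseq.induct) (auto intro: dseq.intros dom_prepend)

lemma dom_tl: "dseq cs xs \<Longrightarrow> dseq (tl cs) xs"
  by (induction rule: dseq.induct) (auto intro: dseq.intros)

lemma dom_single: "dseq [b] xs \<Longrightarrow> \<exists>a\<in>set xs. b \<le> a"
  by (induction "[b]" xs rule: dseq.induct) auto

lemma dom_greedy: "dseq (b # bs) (pre @ a # post) \<Longrightarrow> \<forall>y\<in>set pre. y < b \<Longrightarrow> dseq bs post"
proof (induction pre)
  case Nil
  then show ?case by (cases rule: dseq.cases) (auto dest: dom_tl[where cs = "b # bs", simplified])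
next
  case (Cons y pre)
  from Cons.prems(1) show ?case
    by (cases rule: dseq.cases) (use Cons in auto)
qed

lemma sum_split: fixes bs :: "nat list" shows "D < sum_list bs \<Longrightarrow> \<exists>bs1 b bs2. bs = bs1 @ b # bs2 \<and> sum_list bs1 \<le> D \<and> D < sum_list bs1 + b"
proof (induction bs arbitrary: D)
  case Nil then show ?case by simp
next
  case (Cons x xs)
  show ?case
  proof (cases "D < x")
    case True then show ?thesis by (intro exI[of _ "[]"]) auto
  next
    case False
    then have "D - x < sum_list xs" using Cons.prems by simp
    then obtain bs1 b bs2 where "xs = bs1 @ b # bs2" "sum_list bs1 \<le> D - x" "D - x < sum_list bs1 + b"
      using Cons.IH by blast
    then show ?thesis using False by (intro exI[of _ "x # bs1"]) auto
  qed
qed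

lemma aseq_dom: "(\<forall>b\<in>set bs. 0 < b) \<Longrightarrow> sum_list bs \<le> N \<Longrightarrow> dseq bs (aseq N)"
proof (induction N arbitrary: bs rule: less_induct)
  case (less N)
  show ?case
  proof (cases "N \<le> 1")
    case True
    show ?thesis
    proof (cases bs)
      case Nil then show ?thesis by (simp add: dseq.dnil)
    next
      case (Cons b bs')
      then have "b = 1" "N = 1" using less.prems True
        by auto
      moreover have "bs' = []" using less.prems True Cons by (cases bs') auto
      ultimately show ?thesis using Cons by (subst aseq.simps) (auto intro: dseq.intros)
    qed
  next
    case False
    let ?D = "N div 2"
    have eq: "aseq N = aseq ?D @ [N] @ aseq ?D" using False by (subst aseq.simps) auto
    show ?thesis
    proof (cases "sum_list bs \<le> ?D")
      case True
      then have "dseq bs (aseq ?D)" using less False by auto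
      then have "dseq (bs @ []) (aseq ?D @ ([N] @ aseq ?D))" by (rule dom_append) (rule dseq.dnil)
      then show ?thesis using eq by simp
    next
      case nle: False
      then obtain bs1 b bs2 where s: "bs = bs1 @ b # bs2" "sum_list bs1 \<le> ?D" "?D < sum_list bs1 + b"
        using sum_split[of ?D bs] by auto
      have "sum_list bs2 \<le> ?D" using s less.prems(2) by auto
      then have d2: "dseq bs2 (aseq ?D)" using less s False by auto
      have d1: "dseq bs1 (aseq ?D)" using less s False by auto
      have "b \<le> N" using s less.prems(2) by auto
      then have "dseq (b # bs2) ([N] @ aseq ?D)" using d2 by (auto intro: dseq.intros)
      from dom_append[OF d1 this] show ?thesis using eq s by simp
    qed
  qed
qed

lemma rank_exists:
  fixes s :: "'a::linorder \<Rightarrow> nat"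
  assumes "finite I" "sum s I \<le> K"
  shows "\<exists>\<rho>. inj_on \<rho> I \<and> (\<forall>i\<in>I. 1 \<le> \<rho> i \<and> \<rho> i * s i \<le> K)"
proof -
  define A where "A i = {j\<in>I. s i < s j \<or> (s j = s i \<and> j \<le> i)}" for i
  have fA: "finite (A i)" for i using assms(1) unfolding A_def by auto
  have key: "card (A j) < card (A i)" if "i \<in> I" "j \<in> I" "s i < s j \<or> (s i = s j \<and> j < i)" for i j
  proof -
    have "A j \<subset> A i"
    proof
      show "A j \<subseteq> A i" using that unfolding A_def by auto
      have "i \<in> A i" "i \<notin> A j" using that unfolding A_def by auto
      then show "A j \<noteq> A i" by auto
    qed
    then show ?thesis using fA by (simp add: psubset_card_mono)
  qed
  show ?thesis
  proof (intro exI[of _ "\<lambda>i. card (A i)"] conjI ballI)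
    show "inj_on (\<lambda>i. card (A i)) I"
    proof (rule inj_onI)
      fix i j assume ij: "i \<in> I" "j \<in> I" "card (A i) = card (A j)"
      show "i = j"
      proof (rule ccontr)
        assume "i \<noteq> j"
        then have "(s i < s j \<or> (s i = s j \<and> j < i)) \<or> (s j < s i \<or> (s j = s i \<and> i < j))"
          by (meson linorder_neqE_nat neq_iff)
        then show False using key[of i j] key[of j i] ij by auto
      qed
    qed
    fix i assume i: "i \<in> I"
    have "i \<in> A i" using i unfolding A_def by auto
    then show "1 \<le> card (A i)" using fA by (metis One_nat_def Suc_leI card_gt_0_iff empty_iff)
    have "\<And>j. j \<in> A i \<Longrightarrow> s i \<le> s j" unfolding A_def by auto
    from sum_bounded_below[OF this] have "card (A i) * s i \<le> sum s (A i)" by simp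
    also have "\<dots> \<le> sum s I" using assms(1) by (intro sum_mono2) (auto simp: A_def)
    finally show "card (A i) * s i \<le> K" using assms(2) by simp
  qed
qed

lemma filter_idx:
  "\<exists>h. (\<forall>j<length xs. P (xs!j) \<longrightarrow> h j < length (filter P xs) \<and> filter P xs ! h j = xs ! j)
      \<and> inj_on h {j. j < length xs \<and> P (xs!j)}"
proof (induction xs)
  case Nil then show ?case by auto
next
  case (Cons x xs)
  then obtain h where h: "\<forall>j<length xs. P (xs!j) \<longrightarrow> h j < length (filter P xs) \<and> filter P xs ! h j = xs ! j"
    "inj_on h {j. j < length xs \<and> P (xs!j)}" by blast
  show ?case
  proof (cases "P x")
    case True
    define h' where "h' j = (if j = 0 then 0 else Suc (h (j - 1)))" for j
    have "\<forall>j<length (x#xs). P ((x#xs)!j) \<longrightarrow> h' j < length (filter P (x#xs)) \<and> filter P (x#xs) ! h' j = (x#xs) ! j"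
      using h(1) True by (auto simp: h'_def nth_Cons split: nat.splits)
    moreover have "inj_on h' {j. j < length (x#xs) \<and> P ((x#xs)!j)}"
    proof (rule inj_onI)
      fix a b assume a: "a \<in> {j. j < length (x#xs) \<and> P ((x#xs)!j)}" and b: "b \<in> {j. j < length (x#xs) \<and> P ((x#xs)!j)}"
        and e: "h' a = h' b"
      show "a = b"
      proof (cases "a = 0 \<or> b = 0")
        case True then show ?thesis using e by (auto simp: h'_def split: if_splits)
      next
        case False
        then have "h (a - 1) = h (b - 1)" using e by (auto simp: h'_def)
        moreover have "a - 1 \<in> {j. j < length xs \<and> P (xs!j)}" "b - 1 \<in> {j. j < length xs \<and> P (xs!j)}"
          using a b False by (auto simp: nth_Cons split: nat.splits)
        ultimately have "a - 1 = b - 1" using h(2) by (auto dest: inj_onD)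
        then show ?thesis using False by auto
      qed
    qed
    ultimately show ?thesis by blast
  next
    case False
    define h' where "h' j = h (j - 1)" for j
    have "\<forall>j<length (x#xs). P ((x#xs)!j) \<longrightarrow> h' j < length (filter P (x#xs)) \<and> filter P (x#xs) ! h' j = (x#xs) ! j"
      using h(1) False by (auto simp: h'_def nth_Cons split: nat.splits)
    moreover have "inj_on h' {j. j < length (x#xs) \<and> P ((x#xs)!j)}"
    proof (rule inj_onI)
      fix a b assume a: "a \<in> {j. j < length (x#xs) \<and> P ((x#xs)!j)}" and b: "b \<in> {j. j < length (x#xs) \<and> P ((x#xs)!j)}"
        and e: "h' a = h' b"
      have nz: "a \<noteq> 0" "b \<noteq> 0"
        using a b False by (metis (mono_tags) mem_Collect_eq nth_Cons_0)+
      have "a - 1 \<in> {j. j < length xs \<and> P (xs!j)}" "b - 1 \<in> {j. j < length xs \<and> P (xs!j)}"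
        using a b nz by (auto simp: nth_Cons split: nat.splits)
      then have "a - 1 = b - 1" using h(2) e by (auto simp: h'_def dest: inj_onD)
      then show "a = b" using nz by auto
    qed
    ultimately show ?thesis by blast
  qed
qed

lemma children_slots:
  fixes U :: "nat \<Rightarrow> tree"
  assumes I: "I \<subseteq> {..<length ts}"
    and sumI: "(\<Sum>i\<in>I. sz (ts!i)) \<le> K"
    and slot: "\<forall>i\<in>I. \<forall>r. 1 \<le> r \<and> r * sz (ts!i) \<le> K \<longrightarrow> r - 1 < length L0 \<and> sz (ts!i) \<le> L0!(r-1)"
    and IH: "\<forall>i\<in>I. \<forall>M. sz (ts!i) \<le> M \<longrightarrow> M \<in> set L0 \<longrightarrow> (\<exists>g. emb (ts!i) (U M) g)"
  shows "\<exists>pos G. inj_on pos I \<and> (\<forall>i\<in>I. pos i < length (map U (filter (\<lambda>m. 0<m) L0)) \<and>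
            emb (ts!i) (map U (filter (\<lambda>m. 0<m) L0) ! pos i) (G i))"
proof -
  have fin: "finite I" using I finite_subset by blast
  obtain \<rho> where \<rho>: "inj_on \<rho> I" "\<forall>i\<in>I. 1 \<le> \<rho> i \<and> \<rho> i * sz (ts!i) \<le> K"
    using rank_exists[OF fin sumI] by blast
  obtain h where h: "\<forall>j<length L0. 0 < L0!j \<longrightarrow> h j < length (filter (\<lambda>m. 0<m) L0) \<and> filter (\<lambda>m. 0<m) L0 ! h j = L0 ! j"
    "inj_on h {j. j < length L0 \<and> 0 < L0!j}"
    using filter_idx[of L0 "\<lambda>m. 0<m"] by blast
  have r: "\<rho> i - 1 < length L0" "sz (ts!i) \<le> L0!(\<rho> i - 1)" if "i \<in> I" for i
    using slot \<rho>(2) that by auto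
  have rpos: "0 < L0!(\<rho> i - 1)" if "i \<in> I" for i
    using r(2)[OF that] sz_pos[of "ts!i"] by linarith
  have "\<forall>i\<in>I. \<exists>g. emb (ts!i) (U (L0!(\<rho> i - 1))) g"
    using IH r by (meson nth_mem)
  then obtain G where G: "\<forall>i\<in>I. emb (ts!i) (U (L0!(\<rho> i - 1))) (G i)"
    by metis
  define pos where "pos i = h (\<rho> i - 1)" for i
  show ?thesis
  proof (intro exI[of _ pos] exI[of _ G] conjI ballI)
    show "inj_on pos I"
    proof (rule inj_onI)
      fix i j assume ij: "i \<in> I" "j \<in> I" "pos i = pos j"
      then have "\<rho> i - 1 = \<rho> j - 1"
        using h(2) r rpos unfolding pos_def by (auto dest: inj_onD)
      moreover have "1 \<le> \<rho> i" "1 \<le> \<rho> j" using \<rho>(2) ij by auto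
      ultimately have "\<rho> i = \<rho> j" by linarith
      then show "i = j" using \<rho>(1) ij by (auto dest: inj_onD)
    qed
    fix i assume i: "i \<in> I"
    show "pos i < length (map U (filter (\<lambda>m. 0<m) L0))"
      using h(1) r[OF i] rpos[OF i] unfolding pos_def by auto
    show "emb (ts!i) (map U (filter (\<lambda>m. 0<m) L0) ! pos i) (G i)"
      using h(1) r[OF i] rpos[OF i] G i unfolding pos_def by auto
  qed
qed

lemma path_lemma:
  fixes alpha :: real and n :: nat
  assumes a1: "1/2 < alpha" and a2: "alpha < 1" and n2: "2 \<le> n"
   and IH: "\<forall>M. 1 \<le> M \<and> M < n \<longrightarrow> (\<forall>T. sz T \<le> M \<longrightarrow> (\<exists>g. emb T (Utree alpha M) g))"
  shows "sz T \<le> n \<Longrightarrow> (\<forall>x\<in>set as'. x < n) \<Longrightarrow>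
     (\<forall>bs. (\<forall>b\<in>set bs. 0 < b) \<and> real (sum_list bs) < real (sz T) - alpha * n \<longrightarrow> dseq bs as') \<Longrightarrow>
     (\<exists>f. emb T (pathtree (map (\<lambda>x. map (Utree alpha) (sidel x)) as') (map (Utree alpha) (botl alpha n))) f)"
proof (induction "sz T" arbitrary: T as' rule: less_induct)
  case less
  let ?side = "\<lambda>x. map (Utree alpha) (sidel x)"
  let ?bot = "map (Utree alpha) (botl alpha n)"
  obtain ts where T: "T = Node ts" by (cases T)
  have szT: "sz T = 1 + (\<Sum>i<length ts. sz (ts!i))" using T sz_Node by simp
  show ?case
  proof (cases "\<exists>h<length ts. alpha * n < real (sz (ts!h))")
    case False
    let ?L0 = "nat \<lfloor>alpha * real n\<rfloor> # map (\<lambda>j. (n - 1) div j) [2..<n+1]"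
    have fl: "nat \<lfloor>alpha * real n\<rfloor> < n"
    proof -
      have "alpha*real n < real n" using a1 a2 n2 by auto
      then show ?thesis using n2 by linarith
    qed
    have "\<exists>pos G. inj_on pos {..<length ts} \<and> (\<forall>i\<in>{..<length ts}. pos i < length (map (Utree alpha) (filter (\<lambda>m. 0<m) ?L0)) \<and>
            emb (ts!i) (map (Utree alpha) (filter (\<lambda>m. 0<m) ?L0) ! pos i) (G i))"
    proof (rule children_slots[where K = "n - 1"])
      show "{..<length ts} \<subseteq> {..<length ts}" by simp
      show "(\<Sum>i\<in>{..<length ts}. sz (ts!i)) \<le> n - 1" using szT less.prems(1) by simp
      show "\<forall>i\<in>{..<length ts}. \<forall>r. 1 \<le> r \<and> r * sz (ts!i) \<le> n - 1 \<longrightarrow> r - 1 < length ?L0 \<and> sz (ts!i) \<le> ?L0!(r-1)"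
      proof (intro ballI allI impI)
        fix i r assume i: "i \<in> {..<length ts}" and rr: "1 \<le> r \<and> r * sz (ts!i) \<le> n - 1"
        have s1: "1 \<le> sz (ts!i)" by (rule sz_pos)
        have "r \<le> r * sz (ts!i)" using s1 by simp
        then have rn: "r \<le> n - 1" using rr by linarith
        show "r - 1 < length ?L0 \<and> sz (ts!i) \<le> ?L0!(r-1)"
        proof (cases "r = 1")
          case True
          have "real (sz (ts!i)) \<le> alpha * n" using False i by auto
          then have "sz (ts!i) \<le> nat \<lfloor>alpha * real n\<rfloor>" by (simp add: le_nat_floor)
          then show ?thesis using True by simp
        next
          case r1: False
          then have r2: "2 \<le> r" using rr by auto
          have "?L0!(r-1) = (n - 1) div r"
          proof -
            obtain r' where r': "r = Suc (Suc r')" using r2 by (metis add_2_eq_Suc le_Suc_ex)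
            show ?thesis using r' rn n2 by (simp del: upt_Suc)
          qed
          moreover have "sz (ts!i) \<le> (n - 1) div r"
            using rr r2 by (simp add: less_eq_div_iff_mult_less_eq mult.commute)
          ultimately show ?thesis using rn n2 r2 by simp
        qed
      qed
      show "\<forall>i\<in>{..<length ts}. \<forall>M. sz (ts!i) \<le> M \<longrightarrow> M \<in> set ?L0 \<longrightarrow> (\<exists>g. emb (ts!i) (Utree alpha M) g)"
      proof (intro ballI allI impI)
        fix i M assume "sz (ts!i) \<le> M" "M \<in> set ?L0"
        moreover have "M < n" using \<open>M \<in> set ?L0\<close> fl n2
          by (auto intro: le_less_trans[OF div_le_dividend])
        ultimately show "\<exists>g. emb (ts!i) (Utree alpha M) g"
          using IH sz_pos[of "ts!i"] by auto
      qed
    qed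
    then obtain pos G where pG: "inj_on pos {..<length ts}"
      "\<forall>i<length ts. pos i < length ?bot \<and> emb (ts!i) (?bot ! pos i) (G i)"
      unfolding botl_def by auto
    have "emb T (Node ?bot) (\<lambda>p. case p of [] \<Rightarrow> [] | i#q \<Rightarrow> pos i # G i q)"
      unfolding T by (rule emb_node[OF pG])
    then have "emb T (pathtree [] ?bot) (\<lambda>p. case p of [] \<Rightarrow> [] | i#q \<Rightarrow> pos i # G i q)" by simp
    from emb_pathtree[OF this, of "map ?side as'"] show ?thesis by auto
  next
    case True
    then obtain h where h: "h < length ts" "alpha * n < real (sz (ts!h))" by blast
    define b where "b = sz T - sz (ts!h)"
    have sumh: "(\<Sum>i<length ts. sz (ts!i)) = sz (ts!h) + (\<Sum>i\<in>{..<length ts} - {h}. sz (ts!i))"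
      using h(1) by (simp add: sum.remove)
    have b1: "b = 1 + (\<Sum>i\<in>{..<length ts} - {h}. sz (ts!i))" using szT sumh b_def by simp
    have bsm: "real b < real (sz T) - alpha * n" using h b1 szT sumh b_def by simp
    have "dseq [b] as'" using less.prems(3)[rule_format, of "[b]"] bsm b1 by simp
    then have "\<exists>a\<in>set as'. b \<le> a" using dom_single by blast
    then obtain pre a post where sp: "as' = pre @ a # post" "b \<le> a" "\<forall>y\<in>set pre. \<not> b \<le> y"
      using split_list_first_prop[of as' "\<lambda>a. b \<le> a"] by blast
    have an: "a < n" using less.prems(2) sp(1) by auto
    have hsz: "sz (ts!h) < sz T" using szT sumh by simp
    have "\<exists>f. emb (ts!h) (pathtree (map ?side post) ?bot) f"
    proof (rule less.hyps[OF hsz])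
      show "sz (ts!h) \<le> n" using hsz less.prems(1) by simp
      show "\<forall>x\<in>set post. x < n" using less.prems(2) sp(1) by auto
      show "\<forall>bs. (\<forall>b\<in>set bs. 0 < b) \<and> real (sum_list bs) < real (sz (ts!h)) - alpha * n \<longrightarrow> dseq bs post"
      proof (intro allI impI)
        fix bs assume bs: "(\<forall>b\<in>set bs. 0 < b) \<and> real (sum_list bs) < real (sz (ts!h)) - alpha * n"
        have "real (sum_list (b # bs)) < real (sz T) - alpha * n"
          using bs b_def hsz by simp
        then have "dseq (b # bs) as'" using less.prems(3) bs b1 by auto
        moreover have "\<forall>y\<in>set pre. y < b" using sp(3) by auto
        ultimately show "dseq bs post" using dom_greedy sp(1) by blast
      qed
    qed
    then obtain gh where gh: "emb (ts!h) (pathtree (map ?side post) ?bot) gh" by blast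
    let ?L0 = "(a - 1) # map (\<lambda>j. a div j) [2..<a+1]"
    let ?I = "{..<length ts} - {h}"
    have "\<exists>pos G. inj_on pos ?I \<and> (\<forall>i\<in>?I. pos i < length (map (Utree alpha) (filter (\<lambda>m. 0<m) ?L0)) \<and>
            emb (ts!i) (map (Utree alpha) (filter (\<lambda>m. 0<m) ?L0) ! pos i) (G i))"
    proof (rule children_slots[where K = "b - 1"])
      show "?I \<subseteq> {..<length ts}" by auto
      show "(\<Sum>i\<in>?I. sz (ts!i)) \<le> b - 1" using b1 by simp
      show "\<forall>i\<in>?I. \<forall>r. 1 \<le> r \<and> r * sz (ts!i) \<le> b - 1 \<longrightarrow> r - 1 < length ?L0 \<and> sz (ts!i) \<le> ?L0!(r-1)"
      proof (intro ballI allI impI)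
        fix i r assume i: "i \<in> ?I" and rr: "1 \<le> r \<and> r * sz (ts!i) \<le> b - 1"
        have s1: "1 \<le> sz (ts!i)" by (rule sz_pos)
        have "r \<le> r * sz (ts!i)" using s1 by simp
        then have rn: "r \<le> a - 1" using rr sp(2) by linarith
        show "r - 1 < length ?L0 \<and> sz (ts!i) \<le> ?L0!(r-1)"
        proof (cases "r = 1")
          case True
          then show ?thesis using rr sp(2) by simp
        next
          case r1: False
          then have r2: "2 \<le> r" using rr by auto
          have "?L0!(r-1) = a div r"
          proof -
            obtain r' where r': "r = Suc (Suc r')" using r2 by (metis add_2_eq_Suc le_Suc_ex)
            show ?thesis using r' rn by (simp del: upt_Suc)
          qed
          moreover have "sz (ts!i) \<le> a div r"
            using rr r2 sp(2) by (simp add: less_eq_div_iff_mult_less_eq mult.commute)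
          moreover have "r - 1 < length ?L0" using rn r2 by (simp del: upt_Suc)
          ultimately show ?thesis by simp
        qed
      qed
      show "\<forall>i\<in>?I. \<forall>M. sz (ts!i) \<le> M \<longrightarrow> M \<in> set ?L0 \<longrightarrow> (\<exists>g. emb (ts!i) (Utree alpha M) g)"
      proof (intro ballI allI impI)
        fix i M assume "sz (ts!i) \<le> M" "M \<in> set ?L0"
        moreover have "M < n" using \<open>M \<in> set ?L0\<close> an
          by (auto intro: le_less_trans[OF div_le_dividend])
        ultimately show "\<exists>g. emb (ts!i) (Utree alpha M) g"
          using IH sz_pos[of "ts!i"] by auto
      qed
    qed
    then obtain pos' G' where pG: "inj_on pos' ?I"
      "\<forall>i\<in>?I. pos' i < length (?side a) \<and> emb (ts!i) (?side a ! pos' i) (G' i)"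
      unfolding sidel_def by auto
    define pos where "pos i = (if i = h then 0 else Suc (pos' i))" for i
    define G where "G i = (if i = h then gh else G' i)" for i
    let ?cs = "pathtree (map ?side post) ?bot # ?side a"
    have "emb T (Node ?cs) (\<lambda>p. case p of [] \<Rightarrow> [] | i#q \<Rightarrow> pos i # G i q)"
      unfolding T
    proof (rule emb_node)
      show "inj_on pos {..<length ts}"
        using pG(1) unfolding pos_def inj_on_def by auto
      show "\<forall>i<length ts. pos i < length ?cs \<and> emb (ts!i) (?cs!pos i) (G i)"
      proof (intro allI impI)
        fix i assume i: "i < length ts"
        show "pos i < length ?cs \<and> emb (ts!i) (?cs!pos i) (G i)"
        proof (cases "i = h")
          case True then show ?thesis using gh unfolding pos_def G_def by simp
        next
          case False
          then have "i \<in> ?I" using i by auto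
          then have "pos' i < length (?side a) \<and> emb (ts!i) (?side a ! pos' i) (G' i)" using pG(2) by blast
          then show ?thesis using False unfolding pos_def G_def by (simp only: if_False nth_Cons_Suc length_Cons) simp
        qed
      qed
    qed
    then have "emb T (pathtree (map ?side (a # post)) ?bot) (\<lambda>p. case p of [] \<Rightarrow> [] | i#q \<Rightarrow> pos i # G i q)"
      by simp
    from emb_pathtree[OF this, of "map ?side pre"] show ?thesis using sp(1) by auto
  qed
qed

lemma main_emb:
  assumes a1: "1/2 < alpha" and a2: "alpha < 1"
  shows "1 \<le> n \<Longrightarrow> sz T \<le> n \<Longrightarrow> \<exists>f. emb T (Utree alpha n) f"
proof (induction n arbitrary: T rule: less_induct)
  case (less n)
  show ?case
  proof (cases "n = 1")
    case True
    obtain ts where T: "T = Node ts" by (cases T)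
    have "ts = []"
    proof (rule ccontr)
      assume "ts \<noteq> []"
      then have "sz (ts!0) \<le> (\<Sum>i<length ts. sz (ts!i))"
        by (intro member_le_sum) auto
      then show False using sz_Node[of ts] sz_pos[of "ts!0"] less.prems True T by simp
    qed
    then show ?thesis using T emb_leaf by blast
  next
    case False
    then have n2: "2 \<le> n" using less.prems by auto
    let ?N = "nat \<lfloor>(1-alpha)*real n\<rfloor>"
    have N: "?N < n"
    proof -
      have "(1-alpha)*real n < real n" using a1 a2 n2 by auto
      then show ?thesis using n2 by linarith
    qed
    have IH: "\<forall>M. 1 \<le> M \<and> M < n \<longrightarrow> (\<forall>T. sz T \<le> M \<longrightarrow> (\<exists>g. emb T (Utree alpha M) g))"
      using less.IH by blast
    have "\<exists>f. emb T (pathtree (map (\<lambda>x. map (Utree alpha) (sidel x)) (aseq ?N)) (map (Utree alpha) (botl alpha n))) f"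
    proof (rule path_lemma[OF a1 a2 n2 IH less.prems(2)])
      show "\<forall>x\<in>set (aseq ?N). x < n" using aseq_le N by fastforce
      show "\<forall>bs. (\<forall>b\<in>set bs. 0 < b) \<and> real (sum_list bs) < real (sz T) - alpha * real n \<longrightarrow> dseq bs (aseq ?N)"
      proof (intro allI impI)
        fix bs :: "nat list" assume bs: "(\<forall>b\<in>set bs. 0 < b) \<and> real (sum_list bs) < real (sz T) - alpha * real n"
        have "real (sum_list bs) \<le> (1 - alpha) * real n"
          using bs less.prems(2) by (simp add: algebra_simps)
        then have "sum_list bs \<le> ?N" by (simp add: le_nat_floor)
        then show "dseq bs (aseq ?N)" using aseq_dom bs by blast
      qed
    qed
    then show ?thesis using Utree_unfold[OF a1 a2 n2] by simp
  qed
qed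

theorem lemma3:
  fixes alpha :: real and n :: nat and T :: tree
  assumes "1/2 < alpha" and "alpha < 1"
    and "card (tree_nodes T) = n"
  shows "\<exists>f. inj_on f (tree_nodes T) \<and> f ` tree_nodes T \<subseteq> tree_nodes (Utree alpha n) \<and>
             (\<forall>u\<in>tree_nodes T. \<forall>v\<in>tree_nodes T. f (NCA u v) = NCA (f u) (f v))"
proof -
  have "sz T = n" using assms(3) by (simp add: sz_def)
  then have "\<exists>f. emb T (Utree alpha n) f"
    using main_emb[OF assms(1,2)] sz_pos[of T] by auto
  then show ?thesis unfolding emb_def .
qed

end
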